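(* Fix $h\in\{2,\dots,H\}$. The Bayes optimal predictor for square loss over $D$, i.e. $f^\star=\arg\min_f\mathbb{E}_{(x,a,x',y)\sim D}[(f(x,a,x')-y)^2]$ over all measurable $f$, is $$f^\star(x,a,x')=\frac{T(g^\star(x')\mid g^\star(x),a)}{T(g^\star(x')\mid g^\star(x),a)+\rho_h(g^\star(x'))}.$$ Under the Realizability Assumption, $f^\star\in\mathcal{F}_N$ for any $N\ge N_{KD}$.
   Context: Block MDP: horizon $H$; finite latent states $\mathcal{S}=\sqcup_h\mathcal{S}_h$; countable observations $\mathcal{X}=\sqcup_h\mathcal{X}_h$; finite actions $\mathcal{A}$; start distribution $\mu$; transitions $T(\cdot\mid s,a)\in\Delta(\mathcal{S}_{h+1})$; emissions $q(\cdot\mid s)\in\Delta(\mathcal{X}_h)$ with disjoint supports, decoder $g^\star$; $T(x'\mid x,a)=q(x'\mid g^\star(x'))T(g^\star(x')\mid g^\star(x),a)$. $\Psi_{h-1}$ is a finite set of policies which is an $\alpha$-policy cover of $\mathcal{S}_{h-1}$ (i.e. $\max_{\pi\in\Psi_{h-1}}\mathbb{P}_\pi[s]\ge\alpha\max_{\pi'}\mathbb{P}_{\pi'}[s]$ for $s\in\mathcal{S}_{h-1}$). Distribution $D$ on $\mathcal{X}_{h-1}\times\mathcal{A}\times\mathcal{X}_h\times\{0,1\}$: draw two independent transitions $(x_j,a_j,x_j')$, $j=1,2$, each by choosing $\pi$ uniformly from $\Psi_{h-1}$, rolling in to $x_j\in\mathcal{X}_{h-1}$, taking $a_j\sim\mathrm{Unf}(\mathcal{A})$,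 and $x_j'\sim T(\cdot\mid x_j,a_j)$; with probability $1/2$ output $(x_1,a_1,x_1',1)$ and otherwise $(x_1,a_1,x_2',0)$. $\rho_h\in\Delta(\mathcal{X}_h)$ is the marginal law of $x_1'$, lifted to states by $\rho_h(s)=\sum_{x'\in g^{\star-1}(s)}\rho_h(x')$. Function classes: $\Phi_N$ a finite class of maps $\mathcal{X}\to[N]$, $\mathcal{W}_N$ all functions $[N]\times\mathcal{A}\times[N]\to[0,1]$, $\mathcal{F}_N=\{(x,a,x')\mapsto w(\phi^F(x),a,\phi^B(x'))\}$. KI: for full-support $u\in\Delta(\mathcal{X}\times\mathcal{A})$, $\mathbb{P}_u(x,a\mid x')\propto T(x'\mid x,a)u(x,a)$; backward KI = equal $\mathbb{P}_u(\cdot\mid x')$ for all such $u$, forward KI = equal $T(\cdot\mid x,a)$ for all $a$, KI = both; $N_{KD}$ = max over $h$ of the number of KI classes in $\mathcal{X}_h$. Realizability Assumption (function part): for all $h$, $N\ge N_{KD}$ and full-support $\rho\in\Delta(\mathcal{S}_h)$ there is $f_\rho\in\mathcal{F}_N$ with $f_\rho(x,a,x')=\frac{T(g^\star(x')\mid g^\star(x),a)}{T(g^\star(x')\mid g^\star(x),a)+\rho(g^\star(x'))}$ on $\mathcal{X}_{h-1}\times\mathcal{A}\times\mathcal{X}_h$. *)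

theory Defs
  imports "HOL-Probability.Probability"
begin

text \<open>A block MDP with horizon H, layer map on latent states, start distribution,
  latent transitions, emissions and decoder. Observations of layer h are the x with
  lay (dec x) = h.\<close>

record ('s, 'a, 'x) bmdp =
  hor   :: nat
  lay   :: "'s \<Rightarrow> nat"
  mu    :: "'s pmf"
  trans :: "'s \<Rightarrow> 'a \<Rightarrow> 's pmf"
  emit  :: "'s \<Rightarrow> 'x pmf"
  dec   :: "'x \<Rightarrow> 's"

definition valid_bmdp :: "('s, 'a, 'x) bmdp \<Rightarrow> bool" where
  "valid_bmdp M \<longleftrightarrow>
     hor M \<ge> 1 \<and>
     (\<forall>s. lay M s \<in> {1..hor M}) \<and>
     set_pmf (mu M) \<subseteq> {s. lay M s = 1} \<and>
     (\<forall>s a. lay M s < hor M \<longrightarrow> set_pmf (trans M s a) \<subseteq> {s'. lay M s' = lay M s + 1}) \<and>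
     (\<forall>s. set_pmf (emit M s) \<subseteq> {x. dec M x = s})"

definition Tobs :: "('s, 'a, 'x) bmdp \<Rightarrow> 'x \<Rightarrow> 'a \<Rightarrow> 'x \<Rightarrow> real" where
  "Tobs M x a x' = pmf (emit M (dec M x')) x' * pmf (trans M (dec M x) a) (dec M x')"

definition step_obs :: "('s, 'a, 'x) bmdp \<Rightarrow> 'x \<Rightarrow> 'a \<Rightarrow> 'x pmf" where
  "step_obs M x a = bind_pmf (trans M (dec M x) a) (emit M)"

text \<open>Policies are (randomized, Markov) maps from observations to action distributions.
  roll M p k is the law of the observation at layer k+1 when running p.\<close>
type_synonym ('x, 'a) policy = "'x \<Rightarrow> 'a pmf"

primrec roll :: "('s, 'a, 'x) bmdp \<Rightarrow> ('x, 'a) policy \<Rightarrow> nat \<Rightarrow> 'x pmf" where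
  "roll M p 0 = bind_pmf (mu M) (emit M)"
| "roll M p (Suc k) = bind_pmf (roll M p k) (\<lambda>x. bind_pmf (p x) (\<lambda>a. step_obs M x a))"

definition obs_dist :: "('s, 'a, 'x) bmdp \<Rightarrow> ('x, 'a) policy \<Rightarrow> nat \<Rightarrow> 'x pmf" where
  "obs_dist M p k = roll M p (k - 1)"

definition state_prob :: "('s, 'a, 'x) bmdp \<Rightarrow> ('x, 'a) policy \<Rightarrow> nat \<Rightarrow> 's \<Rightarrow> real" where
  "state_prob M p k s = pmf (map_pmf (dec M) (obs_dist M p k)) s"

definition policy_cover ::
  "('s, 'a, 'x) bmdp \<Rightarrow> ('x, 'a) policy set \<Rightarrow> real \<Rightarrow> nat \<Rightarrow> bool" where
  "policy_cover M Psi \<alpha> k \<longleftrightarrow>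
     (\<forall>s. lay M s = k \<longrightarrow>
        (MAX p\<in>Psi. state_prob M p k s) \<ge> \<alpha> * (SUP p'. state_prob M p' k s))"

definition trans_sample ::
  "('s, 'a::finite, 'x) bmdp \<Rightarrow> ('x, 'a) policy set \<Rightarrow> nat \<Rightarrow> ('x \<times> 'a \<times> 'x) pmf" where
  "trans_sample M Psi h =
     bind_pmf (pmf_of_set Psi) (\<lambda>p.
     bind_pmf (obs_dist M p (h - 1)) (\<lambda>x.
     bind_pmf (pmf_of_set (UNIV :: 'a set)) (\<lambda>a.
     bind_pmf (step_obs M x a) (\<lambda>x'. return_pmf (x, a, x')))))"

definition Ddist ::
  "('s, 'a::finite, 'x) bmdp \<Rightarrow> ('x, 'a) policy set \<Rightarrow> nat \<Rightarrow> ('x \<times> 'a \<times> 'x \<times> bool) pmf" where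
  "Ddist M Psi h =
     bind_pmf (trans_sample M Psi h) (\<lambda>(x1, a1, x1').
     bind_pmf (trans_sample M Psi h) (\<lambda>(x2, a2, x2').
     bind_pmf (bernoulli_pmf (1/2)) (\<lambda>b.
       return_pmf (if b then (x1, a1, x1', True) else (x1, a1, x2', False)))))"

definition rho_obs :: "('s, 'a::finite, 'x) bmdp \<Rightarrow> ('x, 'a) policy set \<Rightarrow> nat \<Rightarrow> 'x pmf" where
  "rho_obs M Psi h = map_pmf (\<lambda>(x, a, x'). x') (trans_sample M Psi h)"

definition rho_state :: "('s, 'a::finite, 'x) bmdp \<Rightarrow> ('x, 'a) policy set \<Rightarrow> nat \<Rightarrow> 's \<Rightarrow> real" where
  "rho_state M Psi h s = pmf (map_pmf (dec M) (rho_obs M Psi h)) s"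

text \<open>Expected square loss E_D[(f(x,a,x') - y)^2] (as an extended non-negative real, so it
  is well defined for every f).\<close>
definition sq_loss :: "('x \<times> 'a \<times> 'x \<times> bool) pmf \<Rightarrow> ('x \<Rightarrow> 'a \<Rightarrow> 'x \<Rightarrow> real) \<Rightarrow> ennreal" where
  "sq_loss D f = (\<integral>\<^sup>+ z. ennreal ((case z of (x, a, x', y) \<Rightarrow> (f x a x' - of_bool y)\<^sup>2)) \<partial>measure_pmf D)"

definition Pu :: "('s, 'a, 'x) bmdp \<Rightarrow> ('x \<times> 'a) pmf \<Rightarrow> 'x \<Rightarrow> ('x \<times> 'a) \<Rightarrow> real" where
  "Pu M u x' = (\<lambda>(x, a). Tobs M x a x' * pmf u (x, a) /
                 measure_pmf.expectation u (\<lambda>(y, b). Tobs M y b x'))"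

definition bwd_KI :: "('s, 'a, 'x) bmdp \<Rightarrow> 'x \<Rightarrow> 'x \<Rightarrow> bool" where
  "bwd_KI M x1 x2 \<longleftrightarrow> (\<forall>u :: ('x \<times> 'a) pmf. set_pmf u = UNIV \<longrightarrow> Pu M u x1 = Pu M u x2)"

text \<open>Forward KI: equal T(.|x,a) for all a (no transitions leave the last layer H).\<close>
definition fwd_KI :: "('s, 'a, 'x) bmdp \<Rightarrow> 'x \<Rightarrow> 'x \<Rightarrow> bool" where
  "fwd_KI M x1 x2 \<longleftrightarrow>
     (lay M (dec M x1) < hor M \<longrightarrow> (\<forall>a. Tobs M x1 a = Tobs M x2 a))"

definition KI :: "('s, 'a, 'x) bmdp \<Rightarrow> 'x \<Rightarrow> 'x \<Rightarrow> bool" where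
  "KI M x1 x2 \<longleftrightarrow> bwd_KI M x1 x2 \<and> fwd_KI M x1 x2"

definition KI_classes :: "('s, 'a, 'x) bmdp \<Rightarrow> nat \<Rightarrow> 'x set set" where
  "KI_classes M h = {x. lay M (dec M x) = h} //
     {(x1, x2). lay M (dec M x1) = h \<and> lay M (dec M x2) = h \<and> KI M x1 x2}"

definition N_KD :: "('s, 'a, 'x) bmdp \<Rightarrow> nat" where
  "N_KD M = Max ((\<lambda>h. card (KI_classes M h)) ` {1..hor M})"

definition valid_Phi :: "(nat \<Rightarrow> ('x \<Rightarrow> nat) set) \<Rightarrow> bool" where
  "valid_Phi Phi \<longleftrightarrow> (\<forall>N. finite (Phi N) \<and> (\<forall>\<phi>\<in>Phi N. \<forall>x. \<phi> x \<in> {1..N}))"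

definition W_cls :: "nat \<Rightarrow> (nat \<Rightarrow> 'a \<Rightarrow> nat \<Rightarrow> real) set" where
  "W_cls N = {w. \<forall>i\<in>{1..N}. \<forall>a. \<forall>j\<in>{1..N}. 0 \<le> w i a j \<and> w i a j \<le> 1}"

definition F_cls :: "(nat \<Rightarrow> ('x \<Rightarrow> nat) set) \<Rightarrow> nat \<Rightarrow> ('x \<Rightarrow> 'a \<Rightarrow> 'x \<Rightarrow> real) set" where
  "F_cls Phi N = {f. \<exists>\<phi>F\<in>Phi N. \<exists>\<phi>B\<in>Phi N. \<exists>w\<in>W_cls N.
                       f = (\<lambda>x a x'. w (\<phi>F x) a (\<phi>B x'))}"

text \<open>The function part of the Realizability Assumption.\<close>
definition realizable :: "('s, 'a, 'x) bmdp \<Rightarrow> (nat \<Rightarrow> ('x \<Rightarrow> nat) set) \<Rightarrow> bool" where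
  "realizable M Phi \<longleftrightarrow>
     (\<forall>h N (\<rho> :: 's pmf). N \<ge> N_KD M \<longrightarrow> set_pmf \<rho> = {s. lay M s = h} \<longrightarrow>
        (\<exists>f\<in>F_cls Phi N. \<forall>x a x'. lay M (dec M x) = h - 1 \<longrightarrow> lay M (dec M x') = h \<longrightarrow>
           f x a x' = pmf (trans M (dec M x) a) (dec M x') /
                      (pmf (trans M (dec M x) a) (dec M x') + pmf \<rho> (dec M x'))))"

end

theory Submission
  imports Defs
begin


definition PXA :: "('s, 'a::finite, 'x) bmdp \<Rightarrow> ('x, 'a) policy set \<Rightarrow> nat \<Rightarrow> ('x \<times> 'a) pmf" where
  "PXA M Psi h = bind_pmf (pmf_of_set Psi) (\<lambda>p. bind_pmf (obs_dist M p (h - 1)) (\<lambda>x.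
     map_pmf (\<lambda>a. (x, a)) (pmf_of_set (UNIV :: 'a set))))"

lemma TS_eq: "trans_sample M Psi h = bind_pmf (PXA M Psi h) (\<lambda>(x, a). map_pmf (\<lambda>x'. (x, a, x')) (step_obs M x a))"
  unfolding trans_sample_def PXA_def
  by (simp add: bind_assoc_pmf bind_return_pmf map_pmf_def)

lemma int_point: "(\<integral>y. (if y = c then k else 0) \<partial>measure_pmf p) = pmf p c * (k::real)"
proof -
  have "(\<lambda>y. if y = c then k else 0) = (\<lambda>y. indicator {c} y * k)" by (auto simp: indicator_def)
  then show ?thesis by (simp add: measure_pmf_single)
qed

lemma pmf_map_pair3: "pmf (map_pmf (\<lambda>x'. (y1, y2, x')) S) (x, a, x') = (if (y1, y2) = (x, a) then pmf S x' else 0)"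
proof (cases "(y1, y2) = (x, a)")
  case True
  have "inj (\<lambda>z. (x, a, z))" by (auto simp: inj_def)
  from pmf_map_inj'[OF this] True show ?thesis by simp
next
  case False then show ?thesis by (auto simp: pmf_eq_0_set_pmf)
qed

lemma pmf_TS: "pmf (trans_sample M Psi h) (x, a, x') = pmf (PXA M Psi h) (x, a) * pmf (step_obs M x a) x'"
  by (simp add: TS_eq pmf_bind int_point case_prod_beta pmf_map_pair3 cong: if_cong)

lemma PXA_map: "map_pmf (\<lambda>(x, a, x'). (x, a)) (trans_sample M Psi h) = PXA M Psi h"
  by (simp add: TS_eq map_bind_pmf pmf.map_comp case_prod_beta o_def bind_return_pmf' cong: if_cong)

lemma int_const: "(\<integral>y. k \<partial>measure_pmf p) = (k::real)"
  by simp

lemma pmf_D_True: "pmf (Ddist M Psi h) (x, a, x', True) = pmf (trans_sample M Psi h) (x, a, x') / 2"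
proof -
  have "\<And>t1 t2. pmf (bind_pmf (bernoulli_pmf (1/2)) (\<lambda>b. return_pmf (if b then (fst t1, fst (snd t1), snd (snd t1), True) else (fst t1, fst (snd t1), snd (snd t2), False)))) (x, a, x', True)
     = (if t1 = (x, a, x') then 1/(2::real) else 0)"
    by (auto simp: pmf_bind pmf_return indicator_def)
  then show ?thesis
    unfolding Ddist_def by (simp add: pmf_bind case_prod_beta int_point cong: if_cong)
qed

lemma pmf_D_False: "pmf (Ddist M Psi h) (x, a, x', False) = pmf (PXA M Psi h) (x, a) * pmf (rho_obs M Psi h) x' / 2"
proof -
  have 1: "\<And>t1 t2. pmf (bind_pmf (bernoulli_pmf (1/2)) (\<lambda>b. return_pmf (if b then (fst t1, fst (snd t1), snd (snd t1), True) else (fst t1, fst (snd t1), snd (snd t2), False)))) (x, a, x', False)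
     = (if (fst t1, fst (snd t1)) = (x, a) then (if snd (snd t2) = x' then 1/(2::real) else 0) else 0)"
    by (auto simp: pmf_bind pmf_return indicator_def)
  have 2: "\<And>t1. (\<integral>t2. (if (fst t1, fst (snd t1)) = (x, a) then (if snd (snd t2) = x' then 1/(2::real) else 0) else 0) \<partial>measure_pmf (trans_sample M Psi h))
     = (if (fst t1, fst (snd t1)) = (x, a) then pmf (rho_obs M Psi h) x' / 2 else 0)"
  proof -
    fix t1
    have "(\<integral>t2. (if snd (snd t2) = x' then 1/(2::real) else 0) \<partial>measure_pmf (trans_sample M Psi h))
       = (\<integral>y. (if y = x' then 1/(2::real) else 0) \<partial>measure_pmf (rho_obs M Psi h))"
      unfolding rho_obs_def by (simp add: case_prod_beta)
    also have "... = pmf (rho_obs M Psi h) x' / 2" by (simp add: int_point)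
    finally show "?thesis t1" by (cases "(fst t1, fst (snd t1)) = (x, a)") auto
  qed
  have 3: "(\<integral>t1. (if (fst t1, fst (snd t1)) = (x, a) then pmf (rho_obs M Psi h) x' / 2 else 0) \<partial>measure_pmf (trans_sample M Psi h))
     = pmf (PXA M Psi h) (x, a) * pmf (rho_obs M Psi h) x' / 2"
  proof -
    have "(\<integral>t1. (if (fst t1, fst (snd t1)) = (x, a) then pmf (rho_obs M Psi h) x' / 2 else 0) \<partial>measure_pmf (trans_sample M Psi h))
      = (\<integral>y. (if y = (x, a) then pmf (rho_obs M Psi h) x' / 2 else 0) \<partial>measure_pmf (map_pmf (\<lambda>(x, a, x'). (x, a)) (trans_sample M Psi h)))"
      by (simp add: case_prod_beta)
    also have "... = pmf (PXA M Psi h) (x, a) * pmf (rho_obs M Psi h) x' / 2"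
      by (simp add: PXA_map int_point)
    finally show ?thesis .
  qed
  have "pmf (Ddist M Psi h) (x, a, x', False) = (\<integral>t1. \<integral>t2. pmf (bind_pmf (bernoulli_pmf (1/2)) (\<lambda>b. return_pmf (if b then (fst t1, fst (snd t1), snd (snd t1), True) else (fst t1, fst (snd t1), snd (snd t2), False)))) (x, a, x', False) \<partial>measure_pmf (trans_sample M Psi h) \<partial>measure_pmf (trans_sample M Psi h))"
    by (simp only: Ddist_def pmf_bind case_prod_beta)
  also have "... = (\<integral>t1. \<integral>t2. (if (fst t1, fst (snd t1)) = (x, a) then (if snd (snd t2) = x' then 1/(2::real) else 0) else 0) \<partial>measure_pmf (trans_sample M Psi h) \<partial>measure_pmf (trans_sample M Psi h))"
    by (simp only: 1)
  also have "... = (\<integral>t1. (if (fst t1, fst (snd t1)) = (x, a) then pmf (rho_obs M Psi h) x' / 2 else 0) \<partial>measure_pmf (trans_sample M Psi h))"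
    by (simp only: 2)
  finally show ?thesis using 3 by simp
qed



definition Lz :: "('x \<times> 'a \<times> 'x \<times> bool) pmf \<Rightarrow> ('x \<Rightarrow> 'a \<Rightarrow> 'x \<Rightarrow> real) \<Rightarrow> 'x \<times> 'a \<times> 'x \<Rightarrow> real" where
  "Lz D f z = (case z of (x, a, x') \<Rightarrow> pmf D (x, a, x', True) * (f x a x' - 1)\<^sup>2 + pmf D (x, a, x', False) * (f x a x')\<^sup>2)"

lemma sq_loss_sum: fixes D :: "('x \<times> 'a \<times> 'x \<times> bool) pmf" shows "sq_loss D f = (\<integral>\<^sup>+ z. ennreal (Lz D f z) \<partial>count_space UNIV)"
proof -
  define g where "g = (\<lambda>w. ennreal (pmf D w) * ennreal (case w of (x, a, x', y) \<Rightarrow> (f x a x' - of_bool y)\<^sup>2))"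
  define j :: "('x \<times> 'a \<times> 'x) \<times> bool \<Rightarrow> 'x \<times> 'a \<times> 'x \<times> bool" where
    "j = (\<lambda>(z, b). (fst z, fst (snd z), snd (snd z), b))"
  have bij: "bij_betw j UNIV UNIV"
  proof (rule o_bij[where g="\<lambda>(x, a, x', b). ((x, a, x'), b)"])
    show "(\<lambda>(x, a, x', b). ((x, a, x'), b)) \<circ> j = id" by (auto simp: j_def fun_eq_iff)
    show "j \<circ> (\<lambda>(x, a, x', b). ((x, a, x'), b)) = id" by (auto simp: j_def fun_eq_iff)
  qed
  have "sq_loss D f = (\<integral>\<^sup>+ w. g w \<partial>count_space UNIV)"
    unfolding sq_loss_def g_def by (rule nn_integral_measure_pmf)
  also have "... = (\<integral>\<^sup>+ p. g (j p) \<partial>count_space UNIV)"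
    by (rule nn_integral_bij_count_space[OF bij, symmetric])
  also have "... = (\<integral>\<^sup>+ z. \<integral>\<^sup>+ b. g (j (z, b)) \<partial>count_space UNIV \<partial>count_space UNIV)"
    by (rule nn_integral_fst_count_space[symmetric])
  also have "... = (\<integral>\<^sup>+ z. g (j (z, True)) + g (j (z, False)) \<partial>count_space UNIV)"
  proof -
    have "\<And>z. (\<integral>\<^sup>+ b. g (j (z, b)) \<partial>count_space UNIV) = g (j (z, True)) + g (j (z, False))"
    proof -
      fix z
      have u: "(UNIV :: bool set) = {True, False}" by auto
      show "?thesis z" by (simp add: nn_integral_count_space_finite u)
    qed
    then show ?thesis by simp
  qed
  also have "... = (\<integral>\<^sup>+ z. ennreal (Lz D f z) \<partial>count_space UNIV)"
  proof -
    have "\<And>z. g (j (z, True)) + g (j (z, False)) = ennreal (Lz D f z)"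
    proof -
      fix z :: "'x \<times> 'a \<times> 'x"
      obtain x a x' where z: "z = (x, a, x')" by (cases z) auto
      have e: "ennreal (pmf D (x, a, x', True) * (f x a x' - 1)\<^sup>2 + pmf D (x, a, x', False) * (f x a x')\<^sup>2)
        = ennreal (pmf D (x, a, x', True)) * ennreal ((f x a x' - 1)\<^sup>2) + ennreal (pmf D (x, a, x', False)) * ennreal ((f x a x')\<^sup>2)"
        by (simp add: ennreal_plus ennreal_mult del: ennreal_plus_if)
      show "?thesis z" unfolding g_def j_def Lz_def z
        by (simp only: prod.case fst_conv snd_conv of_bool_eq e diff_zero)
    qed
    then show ?thesis by simp
  qed
  finally show ?thesis .
qed



lemma quad_id:
  fixes c T r f :: real
  assumes "c \<ge> 0" "T \<ge> 0" "r \<ge> 0"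
  shows "(c * T) * (f - 1)\<^sup>2 + (c * r) * f\<^sup>2 = (c * T) * (T / (T + r) - 1)\<^sup>2 + (c * r) * (T / (T + r))\<^sup>2 + c * (T + r) * (f - T / (T + r))\<^sup>2"
proof (cases "T + r = 0")
  case True
  then have "T = 0" "r = 0" using assms by auto
  then show ?thesis by simp
next
  case False
  define s where "s = T + r"
  define g where "g = T / (T + r)"
  have s: "s \<noteq> 0" using False s_def by simp
  have T: "T = g * s" unfolding g_def s_def using False by simp
  have r: "r = (1 - g) * s" using T s_def by (simp add: algebra_simps)
  have "(c * T) * (f - 1)\<^sup>2 + (c * r) * f\<^sup>2 = (c * T) * (g - 1)\<^sup>2 + (c * r) * g\<^sup>2 + c * s * (f - g)\<^sup>2"
    unfolding T r by (simp add: power2_eq_square algebra_simps)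
  then show ?thesis unfolding g_def s_def .
qed

lemma valid_emit: "valid_bmdp M \<Longrightarrow> x \<in> set_pmf (emit M s) \<Longrightarrow> dec M x = s"
  unfolding valid_bmdp_def by blast

lemma pmf_bind_emit:
  assumes "valid_bmdp M"
  shows "pmf (bind_pmf \<nu> (emit M)) x' = pmf \<nu> (dec M x') * pmf (emit M (dec M x')) x'"
proof -
  define C where "C = pmf (emit M (dec M x')) x'"
  have "\<And>s. pmf (emit M s) x' = (if s = dec M x' then C else 0)"
  proof -
    fix s
    show "?thesis s"
    proof (cases "s = dec M x'")
      case False
      then have "x' \<notin> set_pmf (emit M s)" using valid_emit[OF assms] by blast
      then show ?thesis using False by (simp add: pmf_eq_0_set_pmf)
    qed (simp add: C_def)
  qed
  then have "pmf (bind_pmf \<nu> (emit M)) x' = pmf \<nu> (dec M x') * C" by (simp add: pmf_bind int_point)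
  then show ?thesis unfolding C_def .
qed

lemma map_dec_emit:
  assumes "valid_bmdp M"
  shows "map_pmf (dec M) (bind_pmf \<nu> (emit M)) = \<nu>"
proof -
  have "\<And>s. map_pmf (dec M) (emit M s) = return_pmf s"
  proof -
    fix s
    have "map_pmf (dec M) (emit M s) = map_pmf (\<lambda>_. s) (emit M s)"
      by (rule map_pmf_cong) (auto dest: valid_emit[OF assms])
    then show "map_pmf (dec M) (emit M s) = return_pmf s" by simp
  qed
  then show ?thesis by (simp add: map_bind_pmf bind_return_pmf')
qed

definition nuS :: "('s, 'a::finite, 'x) bmdp \<Rightarrow> ('x, 'a) policy set \<Rightarrow> nat \<Rightarrow> 's pmf" where
  "nuS M Psi h = bind_pmf (PXA M Psi h) (\<lambda>(x, a). trans M (dec M x) a)"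

lemma rho_obs_eq: "rho_obs M Psi h = bind_pmf (nuS M Psi h) (emit M)"
proof -
  have "rho_obs M Psi h = bind_pmf (PXA M Psi h) (\<lambda>(x, a). step_obs M x a)"
    unfolding rho_obs_def TS_eq map_bind_pmf
    by (rule bind_pmf_cong) (auto simp: pmf.map_comp o_def)
  also have "... = bind_pmf (nuS M Psi h) (emit M)"
    unfolding nuS_def step_obs_def bind_assoc_pmf by (simp add: case_prod_beta')
  finally show ?thesis .
qed

lemma rho_state_eq: "valid_bmdp M \<Longrightarrow> rho_state M Psi h s = pmf (nuS M Psi h) s"
  unfolding rho_state_def rho_obs_eq by (simp add: map_dec_emit)

lemma pmf_rho_obs: "valid_bmdp M \<Longrightarrow> pmf (rho_obs M Psi h) x' = pmf (nuS M Psi h) (dec M x') * pmf (emit M (dec M x')) x'"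
  unfolding rho_obs_eq by (rule pmf_bind_emit)

lemma pmf_step: "valid_bmdp M \<Longrightarrow> pmf (step_obs M x a) x' = pmf (trans M (dec M x) a) (dec M x') * pmf (emit M (dec M x')) x'"
  unfolding step_obs_def by (rule pmf_bind_emit)



definition Tl :: "('s, 'a, 'x) bmdp \<Rightarrow> 'x \<Rightarrow> 'a \<Rightarrow> 'x \<Rightarrow> real" where
  "Tl M x a x' = pmf (trans M (dec M x) a) (dec M x')"

definition fopt :: "('s, 'a::finite, 'x) bmdp \<Rightarrow> ('x, 'a) policy set \<Rightarrow> nat \<Rightarrow> 'x \<Rightarrow> 'a \<Rightarrow> 'x \<Rightarrow> real" where
  "fopt M Psi h x a x' = Tl M x a x' / (Tl M x a x' + rho_state M Psi h (dec M x'))"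

definition cw :: "('s, 'a::finite, 'x) bmdp \<Rightarrow> ('x, 'a) policy set \<Rightarrow> nat \<Rightarrow> 'x \<Rightarrow> 'a \<Rightarrow> 'x \<Rightarrow> real" where
  "cw M Psi h x a x' = pmf (PXA M Psi h) (x, a) * pmf (emit M (dec M x')) x' / 2"

lemma rho_state_nonneg: "0 \<le> rho_state M Psi h s"
  unfolding rho_state_def by simp

lemma p1_eq: "valid_bmdp M \<Longrightarrow> pmf (Ddist M Psi h) (x, a, x', True) = cw M Psi h x a x' * Tl M x a x'"
  by (simp add: pmf_D_True pmf_TS pmf_step cw_def Tl_def)

lemma p0_eq: "valid_bmdp M \<Longrightarrow> pmf (Ddist M Psi h) (x, a, x', False) = cw M Psi h x a x' * rho_state M Psi h (dec M x')"
  by (simp add: pmf_D_False pmf_rho_obs rho_state_eq cw_def)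

lemma Lz_decomp:
  assumes "valid_bmdp M"
  shows "Lz (Ddist M Psi h) f (x, a, x') = Lz (Ddist M Psi h) (fopt M Psi h) (x, a, x')
     + cw M Psi h x a x' * (Tl M x a x' + rho_state M Psi h (dec M x')) * (f x a x' - fopt M Psi h x a x')\<^sup>2"
proof -
  have c: "cw M Psi h x a x' \<ge> 0" unfolding cw_def by simp
  have T: "Tl M x a x' \<ge> 0" unfolding Tl_def by simp
  show ?thesis
    unfolding Lz_def prod.case p1_eq[OF assms] p0_eq[OF assms] fopt_def
    by (rule quad_id[OF c T rho_state_nonneg])
qed

lemma fopt_01: "0 \<le> fopt M Psi h x a x' \<and> fopt M Psi h x a x' \<le> 1"
proof -
  have T: "Tl M x a x' \<ge> 0" unfolding Tl_def by simp
  show ?thesis unfolding fopt_def using T rho_state_nonneg[of M Psi h "dec M x'"]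
    by (auto simp: divide_le_eq_1)
qed

lemma loss_decomp:
  fixes M :: "('s, 'a::finite, 'x) bmdp"
  assumes "valid_bmdp M"
  shows "sq_loss (Ddist M Psi h) f = sq_loss (Ddist M Psi h) (fopt M Psi h)
     + (\<integral>\<^sup>+ z. ennreal (case z of (x, a, x') \<Rightarrow> cw M Psi h x a x' * (Tl M x a x' + rho_state M Psi h (dec M x')) * (f x a x' - fopt M Psi h x a x')\<^sup>2) \<partial>count_space UNIV)"
proof -
  have nn1: "\<And>z. Lz (Ddist M Psi h) (fopt M Psi h) z \<ge> 0"
    unfolding Lz_def by (auto split: prod.splits)
  have nn2: "\<And>z. (case z of (x, a, x') \<Rightarrow> cw M Psi h x a x' * (Tl M x a x' + rho_state M Psi h (dec M x')) * (f x a x' - fopt M Psi h x a x')\<^sup>2) \<ge> 0"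
    unfolding cw_def Tl_def by (auto split: prod.splits intro!: mult_nonneg_nonneg add_nonneg_nonneg rho_state_nonneg)
  have "\<And>z. ennreal (Lz (Ddist M Psi h) f z) = ennreal (Lz (Ddist M Psi h) (fopt M Psi h) z)
      + ennreal (case z of (x, a, x') \<Rightarrow> cw M Psi h x a x' * (Tl M x a x' + rho_state M Psi h (dec M x')) * (f x a x' - fopt M Psi h x a x')\<^sup>2)"
  proof -
    fix z :: "'x \<times> 'a \<times> 'x"
    obtain x a x' where z: "z = (x, a, x')" by (cases z) auto
    have L: "Lz (Ddist M Psi h) f (x, a, x') = Lz (Ddist M Psi h) (fopt M Psi h) (x, a, x')
     + cw M Psi h x a x' * (Tl M x a x' + rho_state M Psi h (dec M x')) * (f x a x' - fopt M Psi h x a x')\<^sup>2"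
      by (rule Lz_decomp[OF assms])
    show "?thesis z"
      using nn1[of z] nn2[of z] unfolding z prod.case L
      by (rule ennreal_plus)
  qed
  note P = this
  have "sq_loss (Ddist M Psi h) f = (\<integral>\<^sup>+ z. ennreal (Lz (Ddist M Psi h) (fopt M Psi h) z)
      + ennreal (case z of (x, a, x') \<Rightarrow> cw M Psi h x a x' * (Tl M x a x' + rho_state M Psi h (dec M x')) * (f x a x' - fopt M Psi h x a x')\<^sup>2) \<partial>count_space UNIV)"
    unfolding sq_loss_sum by (simp only: P)
  also have "... = sq_loss (Ddist M Psi h) (fopt M Psi h)
     + (\<integral>\<^sup>+ z. ennreal (case z of (x, a, x') \<Rightarrow> cw M Psi h x a x' * (Tl M x a x' + rho_state M Psi h (dec M x')) * (f x a x' - fopt M Psi h x a x')\<^sup>2) \<partial>count_space UNIV)"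
    unfolding sq_loss_sum by (rule nn_integral_add) auto
  finally show ?thesis .
qed

lemma fopt_loss_fin:
  fixes M :: "('s, 'a::finite, 'x) bmdp"
  shows "sq_loss (Ddist M Psi h) (fopt M Psi h) \<noteq> \<infinity>"
proof -
  have "sq_loss (Ddist M Psi h) (fopt M Psi h) \<le> (\<integral>\<^sup>+ z. 1 \<partial>measure_pmf (Ddist M Psi h))"
    unfolding sq_loss_def
  proof (rule nn_integral_mono)
    fix z :: "'x \<times> 'a \<times> 'x \<times> bool"
    obtain x a x' y where z: "z = (x, a, x', y)" by (cases z) auto
    have "(fopt M Psi h x a x' - of_bool y)\<^sup>2 \<le> 1"
      using fopt_01[of M Psi h x a x'] unfolding abs_square_le_1 by (cases y) auto
    then show "ennreal (case z of (x, a, x', y) \<Rightarrow> (fopt M Psi h x a x' - of_bool y)\<^sup>2) \<le> 1"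
      unfolding z by simp
  qed
  also have "... = 1" by simp
  finally show ?thesis by (auto simp: top_unique)
qed

lemma part12:
  fixes M :: "('s, 'a::finite, 'x) bmdp"
  assumes valid: "valid_bmdp M"
  shows "(\<forall>f. sq_loss (Ddist M Psi h) (fopt M Psi h) \<le> sq_loss (Ddist M Psi h) f)
       \<and> (\<forall>f. sq_loss (Ddist M Psi h) f = sq_loss (Ddist M Psi h) (fopt M Psi h) \<longrightarrow>
              (\<forall>x a x' y. (x, a, x', y) \<in> set_pmf (Ddist M Psi h) \<longrightarrow> f x a x' = fopt M Psi h x a x'))"
proof (intro conjI allI impI)
  fix f :: "'x \<Rightarrow> 'a \<Rightarrow> 'x \<Rightarrow> real"
  note E = loss_decomp[OF valid, of Psi h f]
  show "sq_loss (Ddist M Psi h) (fopt M Psi h) \<le> sq_loss (Ddist M Psi h) f"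
    unfolding E by (rule add_increasing2) auto
next
  fix f :: "'x \<Rightarrow> 'a \<Rightarrow> 'x \<Rightarrow> real" and x a x' y
  assume eq: "sq_loss (Ddist M Psi h) f = sq_loss (Ddist M Psi h) (fopt M Psi h)"
  assume mem: "(x, a, x', y) \<in> set_pmf (Ddist M Psi h)"
  define \<Delta> where "\<Delta> = (\<lambda>z. case z of (x, a, x') \<Rightarrow> cw M Psi h x a x' * (Tl M x a x' + rho_state M Psi h (dec M x')) * (f x a x' - fopt M Psi h x a x')\<^sup>2)"
  note E = loss_decomp[OF valid, of Psi h f, folded \<Delta>_def]
  have "sq_loss (Ddist M Psi h) (fopt M Psi h) + 0 = sq_loss (Ddist M Psi h) (fopt M Psi h) + (\<integral>\<^sup>+ z. ennreal (\<Delta> z) \<partial>count_space UNIV)"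
    using eq E by simp
  then have "(\<integral>\<^sup>+ z. ennreal (\<Delta> z) \<partial>count_space UNIV) = 0"
    using fopt_loss_fin[of M Psi h] ennreal_add_left_cancel by metis
  then have "AE z in count_space UNIV. ennreal (\<Delta> z) = 0"
    by (subst (asm) nn_integral_0_iff_AE) auto
  then have D0: "ennreal (\<Delta> (x, a, x')) = 0" by (simp add: AE_count_space)
  have cnn: "cw M Psi h x a x' \<ge> 0" unfolding cw_def by simp
  have Tnn: "Tl M x a x' \<ge> 0" unfolding Tl_def by simp
  have rnn: "rho_state M Psi h (dec M x') \<ge> 0" by (rule rho_state_nonneg)
  have pos: "pmf (Ddist M Psi h) (x, a, x', y) > 0" using mem by (simp add: pmf_positive)
  have "cw M Psi h x a x' * (Tl M x a x' + rho_state M Psi h (dec M x')) > 0"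
  proof (cases y)
    case True
    then have "cw M Psi h x a x' * Tl M x a x' > 0" using pos p1_eq[OF valid] by simp
    then show ?thesis using cnn Tnn rnn
      by (smt (verit, ccfv_SIG) distrib_left mult_nonneg_nonneg)
  next
    case False
    then have "cw M Psi h x a x' * rho_state M Psi h (dec M x') > 0" using pos p0_eq[OF valid] by simp
    then show ?thesis using cnn Tnn rnn
      by (smt (verit, ccfv_SIG) distrib_left mult_nonneg_nonneg)
  qed
  moreover have "\<Delta> (x, a, x') \<le> 0" using D0 by (simp only: ennreal_eq_0_iff)
  moreover have "\<Delta> (x, a, x') = cw M Psi h x a x' * (Tl M x a x' + rho_state M Psi h (dec M x')) * (f x a x' - fopt M Psi h x a x')\<^sup>2"
    unfolding \<Delta>_def by simp
  ultimately have "(f x a x' - fopt M Psi h x a x')\<^sup>2 \<le> 0"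
    by (metis mult_le_0_iff not_less)
  then show "f x a x' = fopt M Psi h x a x'" by simp
qed



lemma layer_nonempty:
  assumes v: "valid_bmdp M"
  shows "1 \<le> k \<Longrightarrow> k \<le> hor M \<Longrightarrow> \<exists>s. lay M s = k"
proof (induction k)
  case 0 then show ?case by simp
next
  case (Suc k)
  show ?case
  proof (cases "k = 0")
    case True
    obtain s where "s \<in> set_pmf (mu M)" using set_pmf_not_empty by fast
    then have "lay M s = 1" using v unfolding valid_bmdp_def by blast
    then show ?thesis using True by auto
  next
    case False
    then obtain s where s: "lay M s = k" using Suc by auto
    have lt: "lay M s < hor M" using s Suc by simp
    obtain s' where s': "s' \<in> set_pmf (trans M s undefined)" using set_pmf_not_empty by fast
    have "lay M s' = lay M s + 1" using v lt s' unfolding valid_bmdp_def by blast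
    then show ?thesis using s by auto
  qed
qed

lemma key_real:
  fixes u1 u2 r1 r2 m t :: real
  assumes "0 \<le> u1" "u1 \<le> 1" "0 \<le> u2" "u2 \<le> 1" "u1 > 0 \<Longrightarrow> m \<le> u1" "m > 0"
    "r1 > 0" "r2 \<ge> t * r1" "t * m > 1" "u1 * r2 = u2 * r1"
  shows "u1 = 0 \<and> u2 = 0"
proof -
  have "u1 = 0"
  proof (rule ccontr)
    assume "u1 \<noteq> 0"
    then have um: "u1 \<ge> m" using assms by auto
    have r2: "r2 \<ge> 0" using assms(7,8,9,6)
      by (smt (verit, best) mult_pos_pos zero_less_mult_pos2)
    have "u1 * r2 \<ge> m * r2" using um r2 by (rule mult_right_mono)
    moreover have "m * r2 \<ge> m * (t * r1)" using assms(8) assms(6) by simp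
    moreover have "m * (t * r1) = (t * m) * r1" by simp
    moreover have "(t * m) * r1 > r1" using assms(7,9) by simp
    moreover have "r1 \<ge> u2 * r1" using assms(3,4,7) by (simp add: mult_le_cancel_right1)
    ultimately show False using assms(10) by linarith
  qed
  then show ?thesis using assms by simp
qed

lemma generic_rho:
  fixes M :: "('s::finite, 'a::finite, 'x) bmdp"
  assumes ne: "\<exists>s. lay M s = h"
  shows "\<exists>\<rho>::'s pmf. set_pmf \<rho> = {s. lay M s = h} \<and>
     (\<forall>s1 s2 u1 u2. lay M s1 = h \<longrightarrow> lay M s2 = h \<longrightarrow> s1 \<noteq> s2 \<longrightarrow>
        u1 \<in> range (\<lambda>(s, a, s'). pmf (trans M s a) s') \<longrightarrow> u2 \<in> range (\<lambda>(s, a, s'). pmf (trans M s a) s') \<longrightarrow>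
        u1 * pmf \<rho> s2 = u2 * pmf \<rho> s1 \<longrightarrow> u1 = 0 \<and> u2 = 0)"
proof -
  define TV where "TV = range (\<lambda>(s, a, s'). pmf (trans M s a) s')"
  have finTV: "finite TV" unfolding TV_def by simp
  define P where "P = TV \<inter> {0<..}"
  have finP: "finite P" unfolding P_def using finTV by simp
  define m where "m = (if P = {} then 1 else Min P)"
  have m0: "m > 0"
  proof (cases "P = {}")
    case False
    then have "Min P \<in> P" using finP by simp
    then show ?thesis using False unfolding m_def P_def by simp
  qed (simp add: m_def)
  have m1: "m \<le> 1"
  proof (cases "P = {}")
    case False
    then obtain u where u: "u \<in> P" by auto
    then have "Min P \<le> u" using finP by simp
    moreover have "u \<le> 1" using u unfolding P_def TV_def by (auto simp: pmf_le_1)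
    ultimately show ?thesis using False unfolding m_def by simp
  qed (simp add: m_def)
  have hm: "\<And>u. u \<in> TV \<Longrightarrow> u > 0 \<Longrightarrow> m \<le> u"
  proof -
    fix u assume "u \<in> TV" "u > 0"
    then have "u \<in> P" unfolding P_def by simp
    then show "m \<le> u" unfolding m_def using finP by auto
  qed
  have TV01: "\<And>u. u \<in> TV \<Longrightarrow> 0 \<le> u \<and> u \<le> 1" unfolding TV_def by (auto simp: pmf_le_1)
  define t where "t = 2 / m"
  have tm: "t * m > 1" unfolding t_def using m0 by simp
  have t1: "t \<ge> 1" unfolding t_def using m0 m1 by (simp add: field_simps)
  define wgt where "wgt = (\<lambda>s. if lay M s = h then t ^ (to_nat s) else 0)"
  have wnn: "\<And>s. wgt s \<ge> 0" unfolding wgt_def using t1 by simp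
  define S where "S = (\<Sum>s\<in>UNIV. wgt s)"
  obtain s0 where s0: "lay M s0 = h" using ne by auto
  have "wgt s0 > 0" unfolding wgt_def using s0 t1 by simp
  moreover have "wgt s0 \<le> S" unfolding S_def by (rule member_le_sum) (auto simp: wnn)
  ultimately have S0: "S > 0" by simp
  define g where "g = (\<lambda>s. wgt s / S)"
  have gnn: "\<And>s. 0 \<le> g s" unfolding g_def using wnn S0 by simp
  have gsum: "(\<integral>\<^sup>+ s. ennreal (g s) \<partial>count_space UNIV) = 1"
  proof -
    have "(\<integral>\<^sup>+ s. ennreal (g s) \<partial>count_space UNIV) = (\<Sum>s\<in>UNIV. ennreal (g s))"
      by (simp add: nn_integral_count_space_finite)
    also have "... = ennreal (\<Sum>s\<in>UNIV. g s)" using gnn by (simp add: sum_ennreal)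
    also have "(\<Sum>s\<in>UNIV. g s) = 1" unfolding g_def using S0 by (simp add: sum_divide_distrib[symmetric] S_def)
    finally show ?thesis by simp
  qed
  define \<rho> where "\<rho> = embed_pmf g"
  have prho: "\<And>s. pmf \<rho> s = g s" unfolding \<rho>_def by (rule pmf_embed_pmf[OF gnn gsum])
  have srho: "set_pmf \<rho> = {s. lay M s = h}"
    unfolding \<rho>_def set_embed_pmf[OF gnn gsum] using S0 t1 by (auto simp: g_def wgt_def)
  have ratio: "\<And>s1 s2. lay M s1 = h \<Longrightarrow> lay M s2 = h \<Longrightarrow> to_nat s1 < to_nat s2 \<Longrightarrow> pmf \<rho> s2 \<ge> t * pmf \<rho> s1"
  proof -
    fix s1 s2 assume l: "lay M s1 = h" "lay M s2 = h" "to_nat s1 < to_nat s2"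
    have "t * t ^ to_nat s1 = t ^ Suc (to_nat s1)" by simp
    also have "... \<le> t ^ to_nat s2" using l(3) t1 by (intro power_increasing) auto
    finally have "t * t ^ to_nat s1 \<le> t ^ to_nat s2" .
    then have "t * t ^ to_nat s1 / S \<le> t ^ to_nat s2 / S" using S0 by (simp add: divide_right_mono)
    then show "pmf \<rho> s2 \<ge> t * pmf \<rho> s1" unfolding prho g_def wgt_def using l by simp
  qed
  have rpos: "\<And>s. lay M s = h \<Longrightarrow> pmf \<rho> s > 0" unfolding prho g_def wgt_def using S0 t1 by simp
  show ?thesis
  proof (rule exI[of _ \<rho>], rule conjI[OF srho], intro allI impI)
    fix s1 s2 u1 u2
    assume l1: "lay M s1 = h" and l2: "lay M s2 = h" and ne12: "s1 \<noteq> s2"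
      and u1: "u1 \<in> range (\<lambda>(s, a, s'). pmf (trans M s a) s')" and u2: "u2 \<in> range (\<lambda>(s, a, s'). pmf (trans M s a) s')"
      and eq: "u1 * pmf \<rho> s2 = u2 * pmf \<rho> s1"
    have u1': "u1 \<in> TV" and u2': "u2 \<in> TV" using u1 u2 unfolding TV_def by auto
    have "to_nat s1 \<noteq> to_nat s2" using ne12 by simp
    then consider "to_nat s1 < to_nat s2" | "to_nat s2 < to_nat s1" by linarith
    then show "u1 = 0 \<and> u2 = 0"
    proof cases
      case 1
      show ?thesis
        by (rule key_real[where m=m and t=t]) (use TV01[OF u1'] TV01[OF u2'] hm[OF u1'] m0 rpos[OF l1] ratio[OF l1 l2 1] tm eq in auto)
    next
      case 2
      have "u2 = 0 \<and> u1 = 0"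
        by (rule key_real[where m=m and t=t]) (use TV01[OF u1'] TV01[OF u2'] hm[OF u2'] m0 rpos[OF l2] ratio[OF l2 l1 2] tm eq in auto)
      then show ?thesis by simp
    qed
  qed
qed



lemma part3:
  fixes M :: "('s::finite, 'a::finite, 'x::countable) bmdp"
  assumes valid: "valid_bmdp M" and hH: "h \<in> {2..hor M}" and rz: "realizable M Phi" and N: "N \<ge> N_KD M"
  shows "\<exists>f\<in>F_cls Phi N. \<forall>x a x'. lay M (dec M x) = h - 1 \<longrightarrow> lay M (dec M x') = h \<longrightarrow> f x a x' = fopt M Psi h x a x'"
proof -
  have "\<exists>s. lay M s = h" using layer_nonempty[OF valid, of h] hH by auto
  then obtain \<rho> :: "'s pmf" where srho: "set_pmf \<rho> = {s. lay M s = h}"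
    and gen: "\<And>s1 s2 u1 u2. lay M s1 = h \<Longrightarrow> lay M s2 = h \<Longrightarrow> s1 \<noteq> s2 \<Longrightarrow>
        u1 \<in> range (\<lambda>(s, a, s'). pmf (trans M s a) s') \<Longrightarrow> u2 \<in> range (\<lambda>(s, a, s'). pmf (trans M s a) s') \<Longrightarrow>
        u1 * pmf \<rho> s2 = u2 * pmf \<rho> s1 \<Longrightarrow> u1 = 0 \<and> u2 = 0"
    using generic_rho[of M h] by blast
  obtain f where fF: "f \<in> F_cls Phi N" and feq: "\<And>x a x'. lay M (dec M x) = h - 1 \<Longrightarrow> lay M (dec M x') = h \<Longrightarrow>
           f x a x' = pmf (trans M (dec M x) a) (dec M x') /
                      (pmf (trans M (dec M x) a) (dec M x') + pmf \<rho> (dec M x'))"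
    using rz N srho unfolding realizable_def by blast
  from fF obtain \<phi>F \<phi>B w where phF: "\<phi>F \<in> Phi N" and phB: "\<phi>B \<in> Phi N" and wW: "w \<in> W_cls N"
    and fdef: "f = (\<lambda>x a x'. w (\<phi>F x) a (\<phi>B x'))"
    unfolding F_cls_def by blast
  define R where "R = (\<lambda>i j p. lay M (dec M (fst p)) = h - 1 \<and> lay M (dec M (snd p)) = h \<and> \<phi>F (fst p) = i \<and> \<phi>B (snd p) = j)"
  define w' where "w' = (\<lambda>i a j. if \<exists>p. R i j p then fopt M Psi h (fst (SOME p. R i j p)) a (snd (SOME p. R i j p)) else 0)"
  have w'W: "w' \<in> W_cls N"
    unfolding W_cls_def w'_def by (auto intro: fopt_01[THEN conjunct1] fopt_01[THEN conjunct2])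
  have rpos: "\<And>x'. lay M (dec M x') = h \<Longrightarrow> pmf \<rho> (dec M x') > 0"
    using srho by (metis mem_Collect_eq pmf_positive)
  have key: "fopt M Psi h x a x' = w' (\<phi>F x) a (\<phi>B x')"
    if lx: "lay M (dec M x) = h - 1" and lx': "lay M (dec M x') = h" for x a x'
  proof -
    have ex: "\<exists>p. R (\<phi>F x) (\<phi>B x') p" using lx lx' unfolding R_def by (intro exI[of _ "(x, x')"]) simp
    define p0 where "p0 = (SOME p. R (\<phi>F x) (\<phi>B x') p)"
    have Rp0: "R (\<phi>F x) (\<phi>B x') p0" unfolding p0_def using ex by (rule someI_ex)
    define x0 where "x0 = fst p0"
    define x0' where "x0' = snd p0"
    have l0: "lay M (dec M x0) = h - 1" and l0': "lay M (dec M x0') = h"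
      and e1: "\<phi>F x0 = \<phi>F x" and e2: "\<phi>B x0' = \<phi>B x'"
      using Rp0 unfolding R_def x0_def x0'_def by auto
    have w'eq: "w' (\<phi>F x) a (\<phi>B x') = fopt M Psi h x0 a x0'"
      unfolding w'_def using ex by (simp add: p0_def[symmetric] x0_def x0'_def)
    have "f x a x' = f x0 a x0'" unfolding fdef using e1 e2 by simp
    then have eqq: "Tl M x a x' / (Tl M x a x' + pmf \<rho> (dec M x')) = Tl M x0 a x0' / (Tl M x0 a x0' + pmf \<rho> (dec M x0'))"
      using feq[OF lx lx'] feq[OF l0 l0'] unfolding Tl_def by simp
    have T1: "Tl M x a x' \<ge> 0" and T0: "Tl M x0 a x0' \<ge> 0" unfolding Tl_def by simp_all
    have r1: "pmf \<rho> (dec M x') > 0" using rpos[OF lx'] .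
    have r0: "pmf \<rho> (dec M x0') > 0" using rpos[OF l0'] .
    have cross: "Tl M x a x' * pmf \<rho> (dec M x0') = Tl M x0 a x0' * pmf \<rho> (dec M x')"
    proof -
      have d1: "Tl M x a x' + pmf \<rho> (dec M x') \<noteq> 0" using T1 r1 by linarith
      have d0: "Tl M x0 a x0' + pmf \<rho> (dec M x0') \<noteq> 0" using T0 r0 by linarith
      from eqq have "Tl M x a x' * (Tl M x0 a x0' + pmf \<rho> (dec M x0')) = Tl M x0 a x0' * (Tl M x a x' + pmf \<rho> (dec M x'))"
        using d1 d0 by (simp add: divide_eq_eq field_simps)
      then show ?thesis by (simp add: algebra_simps)
    qed
    have "fopt M Psi h x a x' = fopt M Psi h x0 a x0'"
    proof (cases "dec M x' = dec M x0'")
      case True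
      then have "Tl M x a x' = Tl M x0 a x0'" using cross r1 by simp
      then show ?thesis unfolding fopt_def using True by simp
    next
      case False
      have "Tl M x a x' = 0 \<and> Tl M x0 a x0' = 0"
      proof (rule gen[OF lx' l0' False])
        show "Tl M x a x' \<in> range (\<lambda>(s, a, s'). pmf (trans M s a) s')"
          unfolding Tl_def by (rule range_eqI[of _ _ "(dec M x, a, dec M x')"]) simp
        show "Tl M x0 a x0' \<in> range (\<lambda>(s, a, s'). pmf (trans M s a) s')"
          unfolding Tl_def by (rule range_eqI[of _ _ "(dec M x0, a, dec M x0')"]) simp
      qed (rule cross)
      then show ?thesis unfolding fopt_def by simp
    qed
    then show ?thesis using w'eq by simp
  qed
  show ?thesis
  proof (rule bexI[of _ "\<lambda>x a x'. w' (\<phi>F x) a (\<phi>B x')"])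
    show "(\<lambda>x a x'. w' (\<phi>F x) a (\<phi>B x')) \<in> F_cls Phi N" unfolding F_cls_def using phF phB w'W by blast
  qed (use key in auto)
qed


theorem mainTheorem10:
  fixes M :: "('s::finite, 'a::finite, 'x::countable) bmdp"
    and Psi :: "('x, 'a) policy set"
    and \<alpha> :: real and h :: nat
    and Phi :: "nat \<Rightarrow> ('x \<Rightarrow> nat) set"
  assumes "valid_bmdp M"
    and "h \<in> {2..hor M}"
    and "finite Psi" and "Psi \<noteq> {}"
    and "policy_cover M Psi \<alpha> (h - 1)"
    and "valid_Phi Phi"
  defines "fstar \<equiv> (\<lambda>x a x'. pmf (trans M (dec M x) a) (dec M x') /
              (pmf (trans M (dec M x) a) (dec M x') + rho_state M Psi h (dec M x')))"
  shows "(\<forall>f. sq_loss (Ddist M Psi h) fstar \<le> sq_loss (Ddist M Psi h) f)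
       \<and> (\<forall>f. sq_loss (Ddist M Psi h) f = sq_loss (Ddist M Psi h) fstar \<longrightarrow>
              (\<forall>x a x' y. (x, a, x', y) \<in> set_pmf (Ddist M Psi h) \<longrightarrow> f x a x' = fstar x a x'))
       \<and> (realizable M Phi \<longrightarrow>
            (\<forall>N \<ge> N_KD M. \<exists>f\<in>F_cls Phi N. \<forall>x a x'.
               lay M (dec M x) = h - 1 \<longrightarrow> lay M (dec M x') = h \<longrightarrow> f x a x' = fstar x a x'))"
  proof -
  have fs: "fstar = fopt M Psi h"
    unfolding fstar_def by (intro ext) (simp add: fopt_def Tl_def)
  show ?thesis unfolding fs using part12[OF assms(1)] part3[OF assms(1) assms(2)] by blast
qed

end
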